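(* Let $T_1$ be a quadtree in $\mathbb{R}^d$ and $T^*$ its extended quadtree. Let $C_1,C_2$ be two family related (possibly non-leaf) cells of $T^*$ with $|C_1|\le|C_2|$. Then the brand of $C_2$ is at most the brand of $C_1$.
   Context: A quadtree on an axis-aligned root hypercube $R\subset\mathbb{R}^d$ is a hierarchical decomposition in which every node has an associated axis-aligned hypercube (cell) and is either a leaf or has $2^d$ equal-sized children whose cells subdivide its cell. The size $|C|$ of a cell is its edge length. Two cells are neighbors if they are interior-disjoint and share (part of) a $(d-1)$-dimensional facet. Two cells $C_1,C_2$ with $|C_1|\le|C_2|$ are family related if the parent of $C_2$ is an ancestor of $C_1$ (they need not be neighbors). For an integer $j$, a cell $C$ is $2^j$-smooth if every leaf neighboring $C$ has size at most $2^j|C|$. Extended quadtree: the cells of $T_1$ get brand $1$. Recursively, for $j\ge1$, let $T^j$ be the quadtree formed by $\bigcup_{i\le j}T_i$, and let $T_{j+1}$ be the minimal set of cells obtained by splitting cells of $T^j$ such that every cell of $T_j$ is $2^j$-smooth in the resulting quadtree; the cells of $T_{j+1}$ get brand $j+1$. The extended quadtree is $T^*=T^{d+1}$. *)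

theory Defs
  imports "HOL-Analysis.Analysis"
begin

text \<open>A cell of a quadtree on the root hypercube with lower corner a and edge length s
  is encoded by its depth k and integer position p (one coordinate per axis, each
  below 2^k). The dimension d is CARD('d).\<close>

type_synonym 'd qcell = "nat \<times> ('d \<Rightarrow> nat)"

definition valid_cell :: "'d qcell \<Rightarrow> bool" where
  "valid_cell c \<longleftrightarrow> (\<forall>i. snd c i < 2 ^ fst c)"

definition root_cell :: "'d qcell" where
  "root_cell = (0, \<lambda>_. 0)"

definition parent :: "'d qcell \<Rightarrow> 'd qcell" where
  "parent c = (fst c - 1, \<lambda>i. snd c i div 2)"

definition children :: "'d qcell \<Rightarrow> 'd qcell set" where
  "children c = {(Suc (fst c), q) | q. \<forall>i. q i div 2 = snd c i}"

definition ancestor :: "'d qcell \<Rightarrow> 'd qcell \<Rightarrow> bool" where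
  "ancestor A C \<longleftrightarrow> fst A \<le> fst C \<and> (\<forall>i. snd C i div 2 ^ (fst C - fst A) = snd A i)"

definition cube :: "real^'d \<Rightarrow> real \<Rightarrow> 'd qcell \<Rightarrow> (real^'d) set" where
  "cube a s c = {x. \<forall>i. a$i + s * real (snd c i) / 2 ^ fst c \<le> x$i
                       \<and> x$i \<le> a$i + s * (real (snd c i) + 1) / 2 ^ fst c}"

definition csize :: "real \<Rightarrow> 'd qcell \<Rightarrow> real" where
  "csize s c = s / 2 ^ fst c"

definition quadtree :: "'d qcell set \<Rightarrow> bool" where
  "quadtree T \<longleftrightarrow> finite T \<and> root_cell \<in> T \<and> (\<forall>c\<in>T. valid_cell c)
     \<and> (\<forall>c\<in>T. c \<noteq> root_cell \<longrightarrow> parent c \<in> T)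
     \<and> (\<forall>c\<in>T. children c \<inter> T \<noteq> {} \<longrightarrow> children c \<subseteq> T)"

definition leaf :: "'d qcell set \<Rightarrow> 'd qcell \<Rightarrow> bool" where
  "leaf T c \<longleftrightarrow> c \<in> T \<and> children c \<inter> T = {}"

definition neighbors :: "real^'d \<Rightarrow> real \<Rightarrow> 'd qcell \<Rightarrow> 'd qcell \<Rightarrow> bool" where
  "neighbors a s c1 c2 \<longleftrightarrow>
     interior (cube a s c1) \<inter> interior (cube a s c2) = {}
     \<and> aff_dim (cube a s c1 \<inter> cube a s c2) = int CARD('d) - 1"

definition smooth :: "real^'d \<Rightarrow> real \<Rightarrow> 'd qcell set \<Rightarrow> 'd qcell \<Rightarrow> nat \<Rightarrow> bool" where
  "smooth a s Q C j \<longleftrightarrow>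
     (\<forall>L. leaf Q L \<and> neighbors a s L C \<longrightarrow> csize s L \<le> 2 ^ j * csize s C)"

text \<open>ext a s T1 j is T^j (with T^0 = {}), so T_j = T^j - T^(j-1).
  T^(j+1) is the least quadtree containing T^j in which every cell of T_j is
  2^j-smooth (T_(j+1) being the cells added by splitting).\<close>
fun ext :: "real^'d \<Rightarrow> real \<Rightarrow> 'd qcell set \<Rightarrow> nat \<Rightarrow> 'd qcell set" where
  "ext a s T1 0 = {}"
| "ext a s T1 (Suc 0) = T1"
| "ext a s T1 (Suc (Suc j)) =
     \<Inter> {Q. quadtree Q \<and> ext a s T1 (Suc j) \<subseteq> Q
            \<and> (\<forall>C \<in> ext a s T1 (Suc j) - ext a s T1 j. smooth a s Q C (Suc j))}"

definition extended_quadtree :: "real^'d \<Rightarrow> real \<Rightarrow> 'd qcell set \<Rightarrow> 'd qcell set" where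
  "extended_quadtree a s T1 = ext a s T1 (CARD('d) + 1)"

text \<open>Brand of a cell: the j with C in T_j, i.e. least j with C in T^j.\<close>
definition brand :: "real^'d \<Rightarrow> real \<Rightarrow> 'd qcell set \<Rightarrow> 'd qcell \<Rightarrow> nat" where
  "brand a s T1 C = (LEAST j. C \<in> ext a s T1 j)"

definition family_related :: "real \<Rightarrow> 'd qcell \<Rightarrow> 'd qcell \<Rightarrow> bool" where
  "family_related s C1 C2 \<longleftrightarrow> csize s C1 \<le> csize s C2 \<and> C2 \<noteq> root_cell
     \<and> ancestor (parent C2) C1"

end

theory Submission
  imports Defs
begin

definition unif :: "nat \<Rightarrow> ('d::finite) qcell set" where
  "unif N = {c. fst c \<le> N \<and> valid_cell c}"

lemma valid_depth0: "valid_cell c \<Longrightarrow> fst c = 0 \<Longrightarrow> c = root_cell"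
  by (cases c) (auto simp: valid_cell_def root_cell_def)

lemma unif_finite: "finite (unif N :: ('d::finite) qcell set)"
proof -
  have fin: "finite {f :: 'd \<Rightarrow> nat. \<forall>x. (x \<in> UNIV \<longrightarrow> f x \<in> {..<2^N}) \<and> (x \<notin> UNIV \<longrightarrow> f x = 0)}"
    by (rule finite_set_of_finite_funs) auto
  have "unif N \<subseteq> {..N} \<times> {f :: 'd \<Rightarrow> nat. \<forall>x. (x \<in> UNIV \<longrightarrow> f x \<in> {..<2^N}) \<and> (x \<notin> UNIV \<longrightarrow> f x = 0)}"
  proof
    fix c :: "'d qcell" assume "c \<in> unif N"
    then have "fst c \<le> N" "\<forall>i. snd c i < 2 ^ fst c" by (auto simp: unif_def valid_cell_def)
    moreover have "(2::nat) ^ fst c \<le> 2 ^ N" using \<open>fst c \<le> N\<close> by (simp add: power_increasing)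
    ultimately show "c \<in> {..N} \<times> {f :: 'd \<Rightarrow> nat. \<forall>x. (x \<in> UNIV \<longrightarrow> f x \<in> {..<2^N}) \<and> (x \<notin> UNIV \<longrightarrow> f x = 0)}" by (cases c) (auto intro: less_le_trans)
  qed
  then show ?thesis using fin by (rule finite_subset[OF _ finite_cartesian_product[OF finite_atMost]])
qed

lemma unif_quadtree: "quadtree (unif N :: ('d::finite) qcell set)"
  unfolding quadtree_def
proof (intro conjI ballI impI)
  show "finite (unif N :: 'd qcell set)" by (rule unif_finite)
  show "root_cell \<in> (unif N :: 'd qcell set)" by (simp add: unif_def root_cell_def valid_cell_def)
  fix c :: "'d qcell"
  { assume "c \<in> unif N" then show "valid_cell c" by (simp add: unif_def) }
  { assume c: "c \<in> unif N" "c \<noteq> root_cell"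
    then have v: "\<forall>i. snd c i < 2 ^ fst c" "fst c \<le> N" by (auto simp: unif_def valid_cell_def)
    have "fst c \<noteq> 0" using c valid_depth0 by (simp add: unif_def) blast
    then obtain m where m: "fst c = Suc m" by (cases "fst c") auto
    have "\<forall>i. snd c i div 2 < 2 ^ m" using v m by (auto simp: less_mult_imp_div_less mult.commute)
    then show "parent c \<in> unif N" using v m by (simp add: unif_def parent_def valid_cell_def) }
  { assume c: "c \<in> unif N" and ne: "children c \<inter> unif N \<noteq> {}"
    then obtain x where x: "x \<in> children c" "x \<in> unif N" by blast
    then obtain q where "x = (Suc (fst c), q)" unfolding children_def by blast
    then have "(Suc (fst c), q) \<in> unif N" using x by simp
    then have le: "Suc (fst c) \<le> N" by (simp add: unif_def)
    have v: "\<forall>i. snd c i < 2 ^ fst c" using c by (auto simp: unif_def valid_cell_def)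
    show "children c \<subseteq> unif N"
    proof
      fix x assume "x \<in> children c"
      then obtain q where x: "x = (Suc (fst c), q)" "\<forall>i. q i div 2 = snd c i" by (auto simp: children_def)
      have "\<forall>i. q i < 2 ^ Suc (fst c)"
      proof
        fix i have "q i div 2 < 2 ^ fst c" using x v by simp
        then show "q i < 2 ^ Suc (fst c)" by auto
      qed
      then show "x \<in> unif N" using x le by (simp add: unif_def valid_cell_def)
    qed }
qed

lemma unif_leaf: "leaf (unif N :: ('d::finite) qcell set) L \<Longrightarrow> fst L = N"
proof (rule ccontr)
  assume l: "leaf (unif N) L" and ne: "fst L \<noteq> N"
  then have L: "fst L < N" "\<forall>i. snd L i < 2 ^ fst L" by (auto simp: leaf_def unif_def valid_cell_def)
  let ?x = "(Suc (fst L), \<lambda>i. 2 * snd L i) :: 'd qcell"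
  have "?x \<in> children L" by (auto simp: children_def)
  moreover have "?x \<in> unif N" using L by (auto simp: unif_def valid_cell_def)
  ultimately show False using l by (auto simp: leaf_def)
qed

lemma unif_smooth:
  assumes "s > 0" "fst C \<le> N"
  shows "smooth a s (unif N) C j"
  unfolding smooth_def
proof (intro allI impI)
  fix L assume "leaf (unif N) L \<and> neighbors a s L C"
  then have "fst L = N" using unif_leaf by blast
  have "(2::real) ^ fst C \<le> 2 ^ N" using assms by (simp add: power_increasing)
  then have "s / 2 ^ N \<le> s / 2 ^ fst C" using assms by (simp add: frac_le)
  also have "\<dots> \<le> 2 ^ j * (s / 2 ^ fst C)"
  proof -
    have h1: "(1::real) \<le> 2^j" by simp
    have h2: "0 \<le> s / 2^fst C" using assms by simp
    show ?thesis using mult_right_mono[OF h1 h2] by simp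
  qed
  finally show "csize s L \<le> 2 ^ j * csize s C" using \<open>fst L = N\<close> by (simp add: csize_def)
qed

lemma ext_quadtree:
  assumes "s > 0" "quadtree T1"
  shows "quadtree (ext a s T1 (Suc n))"
proof (induction n)
  case 0 then show ?case using assms by simp
next
  case (Suc n)
  let ?S = "ext a s T1 (Suc n)"
  let ?F = "{Q. quadtree Q \<and> ?S \<subseteq> Q
            \<and> (\<forall>C \<in> ?S - ext a s T1 n. smooth a s Q C (Suc n))}"
  define N where "N = Max (fst ` ?S)"
  have fin: "finite ?S" using Suc by (simp add: quadtree_def)
  have dep: "\<And>c. c \<in> ?S \<Longrightarrow> fst c \<le> N" unfolding N_def using fin by simp
  have h1: "?S \<subseteq> unif N" using dep Suc by (auto simp: unif_def quadtree_def)
  have h2: "\<forall>C \<in> ?S - ext a s T1 n. smooth a s (unif N) C (Suc n)"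
  proof
    fix C assume "C \<in> ?S - ext a s T1 n"
    then have "fst C \<le> N" using dep by simp
    then show "smooth a s (unif N) C (Suc n)" by (rule unif_smooth[OF assms(1)])
  qed
  have "unif N \<in> ?F" by (simp only: mem_Collect_eq) (intro conjI unif_quadtree h1 h2)
  then have sub: "\<Inter> ?F \<subseteq> unif N" by (rule Inter_lower)
  have eq: "ext a s T1 (Suc (Suc n)) = \<Inter> ?F" by simp
  have f1: "finite (\<Inter> ?F)" using sub unif_finite finite_subset by blast
  have f2: "root_cell \<in> \<Inter> ?F"
  proof (rule InterI)
    fix Q assume Q: "Q \<in> ?F"
    have "quadtree Q" by (rule conjunct1[OF CollectD[OF Q]])
    then show "root_cell \<in> Q" unfolding quadtree_def by (elim conjE)
  qed
  have f3: "\<forall>c \<in> \<Inter> ?F. valid_cell c"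
  proof
    fix c assume "c \<in> \<Inter> ?F" then have "c \<in> unif N" using sub by (rule subsetD[rotated])
    then show "valid_cell c" unfolding unif_def by blast
  qed
  have f4: "\<forall>c \<in> \<Inter> ?F. c \<noteq> root_cell \<longrightarrow> parent c \<in> \<Inter> ?F"
  proof (intro ballI impI InterI)
    fix c Q assume c: "c \<in> \<Inter> ?F" "c \<noteq> root_cell" and Q: "Q \<in> ?F"
    have "c \<in> Q" "quadtree Q" by (rule InterD[OF c(1) Q]) (rule conjunct1[OF CollectD[OF Q]])
    then show "parent c \<in> Q" using \<open>c \<noteq> root_cell\<close> unfolding quadtree_def by blast
  qed
  have f5: "\<forall>c \<in> \<Inter> ?F. children c \<inter> \<Inter> ?F \<noteq> {} \<longrightarrow> children c \<subseteq> \<Inter> ?F"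
  proof (intro ballI impI)
    fix c assume c: "c \<in> \<Inter> ?F" and ne: "children c \<inter> \<Inter> ?F \<noteq> {}"
    show "children c \<subseteq> \<Inter> ?F"
    proof (rule Inter_greatest)
      fix Q assume Q: "Q \<in> ?F"
      have "children c \<inter> Q \<noteq> {}"
      proof
        assume "children c \<inter> Q = {}"
        moreover have "children c \<inter> \<Inter> ?F \<subseteq> children c \<inter> Q" using Inter_lower[OF Q] by blast
        ultimately show False using ne by auto
      qed
      moreover have "c \<in> Q" by (rule InterD[OF c Q])
      moreover have "quadtree Q" by (rule conjunct1[OF CollectD[OF Q]])
      ultimately show "children c \<subseteq> Q" unfolding quadtree_def by blast
    qed
  qed
  have "quadtree (\<Inter> ?F)" unfolding quadtree_def[of "\<Inter> ?F"] by (intro conjI f1 f2 f3 f4 f5)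
  then show ?case by (simp only: eq)
qed

lemma anc_in:
  assumes "quadtree T" "C \<in> T" "fst C = n + t"
  shows "(n, \<lambda>i. snd C i div 2 ^ t) \<in> T"
  using assms(2,3)
proof (induction t arbitrary: C)
  case 0 then show ?case by (cases C) simp
next
  case (Suc t)
  have "valid_cell C" using assms(1) Suc.prems by (auto simp: quadtree_def)
  have "C \<noteq> root_cell" using Suc.prems by (auto simp: root_cell_def)
  then have "parent C \<in> T" using assms(1) Suc.prems by (auto simp: quadtree_def)
  moreover have "fst (parent C) = n + t" using Suc.prems by (simp add: parent_def)
  ultimately have "(n, \<lambda>i. snd (parent C) i div 2 ^ t) \<in> T" using Suc.IH by blast
  moreover have "(\<lambda>i. snd (parent C) i div 2 ^ t) = (\<lambda>i. snd C i div 2 ^ Suc t)"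
    by (simp add: parent_def div_mult2_eq)
  ultimately show ?case by simp
qed

theorem lemma15:
  fixes a :: "real^'d" and s :: real and T1 :: "'d qcell set" and C1 C2 :: "'d qcell"
  assumes "s > 0"
    and "quadtree T1"
    and "C1 \<in> extended_quadtree a s T1"
    and "C2 \<in> extended_quadtree a s T1"
    and "family_related s C1 C2"
  shows "brand a s T1 C2 \<le> brand a s T1 C1"
proof -
  let ?j = "brand a s T1 C1"
  have C1j: "C1 \<in> ext a s T1 ?j" unfolding brand_def
    using assms(3) unfolding extended_quadtree_def by (rule LeastI)
  have "?j \<noteq> 0" using C1j by (metis empty_iff ext.simps(1))
  then obtain n where jn: "?j = Suc n" by (cases ?j) auto
  define T where "T = ext a s T1 (Suc n)"
  have qT: "quadtree T" unfolding T_def using ext_quadtree assms(1,2) by blast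
  have C1T: "C1 \<in> T" using C1j jn T_def by simp
  have qE: "quadtree (extended_quadtree a s T1)" unfolding extended_quadtree_def
    using ext_quadtree assms(1,2) by simp
  have vC2: "valid_cell C2" using qE assms(4) by (auto simp: quadtree_def)
  have fr: "csize s C1 \<le> csize s C2" "C2 \<noteq> root_cell" "ancestor (parent C2) C1"
    using assms(5) by (auto simp: family_related_def)
  have "fst C2 \<noteq> 0" using fr(2) vC2 valid_depth0 by blast
  then obtain m where m: "fst C2 = Suc m" by (cases "fst C2") auto
  have k: "fst C2 \<le> fst C1"
  proof (rule ccontr)
    assume "\<not> fst C2 \<le> fst C1"
    then have "(2::real) ^ fst C1 < 2 ^ fst C2" by simp
    then have "s / 2 ^ fst C2 < s / 2 ^ fst C1" using assms(1)
      by (rule divide_strict_left_mono) (use assms(1) in simp_all)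
    then show False using fr(1) by (simp add: csize_def)
  qed
  obtain t where t: "fst C1 = Suc m + t" using k m le_Suc_ex by metis
  have anc: "\<forall>i. snd C1 i div 2 ^ (fst C1 - m) = snd C2 i div 2"
    using fr(3) m by (simp add: ancestor_def parent_def)
  define D :: "'d qcell" where "D = (Suc m, \<lambda>i. snd C1 i div 2 ^ t)"
  have DT: "D \<in> T" unfolding D_def by (rule anc_in[OF qT C1T t])
  have "(m, \<lambda>i. snd C1 i div 2 ^ Suc t) \<in> T" by (rule anc_in[OF qT C1T]) (simp add: t)
  moreover have "parent C2 = (m, \<lambda>i. snd C1 i div 2 ^ Suc t)"
    using anc t m by (simp add: parent_def)
  ultimately have pT: "parent C2 \<in> T" by simp
  have "D \<in> children (parent C2)"
  proof -
    have "\<And>i. snd C1 i div 2 ^ t div 2 = snd C2 i div 2"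
    proof -
      fix i
      have "snd C1 i div 2 ^ t div 2 = snd C1 i div (2 ^ t * 2)" by (simp add: div_mult2_eq)
      also have "\<dots> = snd C1 i div 2 ^ (fst C1 - m)" using t by (simp add: mult.commute)
      finally show "snd C1 i div 2 ^ t div 2 = snd C2 i div 2" using anc by simp
    qed
    then show ?thesis using m by (auto simp: D_def children_def parent_def)
  qed
  then have "children (parent C2) \<inter> T \<noteq> {}" using DT by blast
  then have "children (parent C2) \<subseteq> T" using qT pT by (auto simp: quadtree_def)
  moreover have "C2 \<in> children (parent C2)" using m by (cases C2) (auto simp: children_def parent_def)
  ultimately have "C2 \<in> ext a s T1 ?j" using jn T_def by auto
  then show ?thesis unfolding brand_def by (rule Least_le)
qed

end
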